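(* Let $(G,\cdot,N,\star,\odot)$ be a left skew bracoid, and for $g\in G$ let $\alpha(g):N\to N$ be the map ${}^{\alpha(g)}\eta=\overline{(g\odot e_N)}\star(g\odot\eta)\star\overline{\eta}$. Then for all $g,h\in G$ and $\mu,\eta\in N$: (1) ${}^{\alpha(g)}(\eta\star\mu)=({}^{\alpha(g)}\eta)\star\eta\star({}^{\alpha(g)}\mu)\star\overline{\eta}$; (2) ${}^{\alpha(g)}e_N={}^{\alpha(e_G)}\eta=e_N$; (3) ${}^{\alpha(g)}\overline{\eta}=\overline{\eta}\star\overline{({}^{\alpha(g)}\eta)}\star\eta$; (4) ${}^{\alpha(gh)}\eta=({}^{\alpha(g)}({}^{\alpha(h)}\eta))\star({}^{\alpha(h)}\eta)\star({}^{\alpha(g)}\eta)$.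
   Context: For a group $(N,\star)$, $e_N$ denotes its identity and $\overline{\eta}$ the inverse of $\eta$; for a group $(G,\cdot)$, $e_G$ is its identity. A left skew bracoid is a 5-tuple $(G,\cdot,N,\star,\odot)$ where $(G,\cdot)$ and $(N,\star)$ are groups and $\odot$ is a transitive (left) action of $(G,\cdot)$ on the set $N$ such that $g\odot(\mu\star\eta)=(g\odot\mu)\star\overline{(g\odot e_N)}\star(g\odot\eta)$ for all $g\in G$, $\mu,\eta\in N$. *)

theory Defs
  imports "HOL-Algebra.Group_Action"
begin

definition left_skew_bracoid ::
  "('g, 'a) monoid_scheme \<Rightarrow> ('n, 'b) monoid_scheme \<Rightarrow> ('g \<Rightarrow> 'n \<Rightarrow> 'n) \<Rightarrow> bool" where
  "left_skew_bracoid G N act \<longleftrightarrow>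
     group G \<and> group N \<and> transitive_action G (carrier N) act \<and>
     (\<forall>g \<in> carrier G. \<forall>\<mu> \<in> carrier N. \<forall>\<eta> \<in> carrier N.
        act g (\<mu> \<otimes>\<^bsub>N\<^esub> \<eta>) =
          act g \<mu> \<otimes>\<^bsub>N\<^esub> inv\<^bsub>N\<^esub> (act g \<one>\<^bsub>N\<^esub>) \<otimes>\<^bsub>N\<^esub> act g \<eta>)"

definition bracoid_alpha ::
  "('n, 'b) monoid_scheme \<Rightarrow> ('g \<Rightarrow> 'n \<Rightarrow> 'n) \<Rightarrow> 'g \<Rightarrow> 'n \<Rightarrow> 'n" where
  "bracoid_alpha N act g \<eta> =
     inv\<^bsub>N\<^esub> (act g \<one>\<^bsub>N\<^esub>) \<otimes>\<^bsub>N\<^esub> act g \<eta> \<otimes>\<^bsub>N\<^esub> inv\<^bsub>N\<^esub> \<eta>"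

end

theory Submission
  imports Defs
begin

lemma bracoid_facts:
  assumes B: "left_skew_bracoid G N act"
  shows "group G" "group N" "\<And>g x. g \<in> carrier G \<Longrightarrow> x \<in> carrier N \<Longrightarrow> act g x \<in> carrier N"
    "\<And>g h x. g \<in> carrier G \<Longrightarrow> h \<in> carrier G \<Longrightarrow> x \<in> carrier N \<Longrightarrow> act (g \<otimes>\<^bsub>G\<^esub> h) x = act g (act h x)"
    "\<And>x. x \<in> carrier N \<Longrightarrow> act \<one>\<^bsub>G\<^esub> x = x"
proof -
  have T: "transitive_action G (carrier N) act" using B unfolding left_skew_bracoid_def by blast
  then interpret group_action G "carrier N" act unfolding transitive_action_def by blast
  show "group G" "group N" using B unfolding left_skew_bracoid_def by auto
  show "\<And>g x. g \<in> carrier G \<Longrightarrow> x \<in> carrier N \<Longrightarrow> act g x \<in> carrier N"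
    using element_image by blast
  show "\<And>g h x. g \<in> carrier G \<Longrightarrow> h \<in> carrier G \<Longrightarrow> x \<in> carrier N \<Longrightarrow> act (g \<otimes>\<^bsub>G\<^esub> h) x = act g (act h x)"
    using composition_rule by blast
  show "\<And>x. x \<in> carrier N \<Longrightarrow> act \<one>\<^bsub>G\<^esub> x = x"
    using id_eq_one by (metis restrict_apply')
qed

theorem lemma2p4:
  fixes G :: "('g, 'a) monoid_scheme" and N :: "('n, 'b) monoid_scheme"
    and act :: "'g \<Rightarrow> 'n \<Rightarrow> 'n"
  assumes "left_skew_bracoid G N act"
    and "g \<in> carrier G" and "h \<in> carrier G"
    and "\<mu> \<in> carrier N" and "\<eta> \<in> carrier N"
  shows "(bracoid_alpha N act g (\<eta> \<otimes>\<^bsub>N\<^esub> \<mu>) =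
           bracoid_alpha N act g \<eta> \<otimes>\<^bsub>N\<^esub> \<eta> \<otimes>\<^bsub>N\<^esub> bracoid_alpha N act g \<mu> \<otimes>\<^bsub>N\<^esub> inv\<^bsub>N\<^esub> \<eta>) \<and>
        (bracoid_alpha N act g \<one>\<^bsub>N\<^esub> = \<one>\<^bsub>N\<^esub>) \<and>
        (bracoid_alpha N act \<one>\<^bsub>G\<^esub> \<eta> = \<one>\<^bsub>N\<^esub>) \<and>
        (bracoid_alpha N act g (inv\<^bsub>N\<^esub> \<eta>) =
           inv\<^bsub>N\<^esub> \<eta> \<otimes>\<^bsub>N\<^esub> inv\<^bsub>N\<^esub> (bracoid_alpha N act g \<eta>) \<otimes>\<^bsub>N\<^esub> \<eta>) \<and>
        (bracoid_alpha N act (g \<otimes>\<^bsub>G\<^esub> h) \<eta> =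
           bracoid_alpha N act g (bracoid_alpha N act h \<eta>) \<otimes>\<^bsub>N\<^esub> bracoid_alpha N act h \<eta>
             \<otimes>\<^bsub>N\<^esub> bracoid_alpha N act g \<eta>)"
proof -
  note F = bracoid_facts[OF assms(1)]
  interpret N: group N by (rule F(2))
  interpret G: group G by (rule F(1))
  have cl: "\<And>g x. g \<in> carrier G \<Longrightarrow> x \<in> carrier N \<Longrightarrow> act g x \<in> carrier N" by (rule F(3))
  have comp: "\<And>g h x. g \<in> carrier G \<Longrightarrow> h \<in> carrier G \<Longrightarrow> x \<in> carrier N \<Longrightarrow> act (g \<otimes>\<^bsub>G\<^esub> h) x = act g (act h x)" by (rule F(4))
  have br: "\<And>g \<mu> \<eta>. g \<in> carrier G \<Longrightarrow> \<mu> \<in> carrier N \<Longrightarrow> \<eta> \<in> carrier N \<Longrightarrow> act g (\<mu> \<otimes>\<^bsub>N\<^esub> \<eta>) =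
          act g \<mu> \<otimes>\<^bsub>N\<^esub> inv\<^bsub>N\<^esub> (act g \<one>\<^bsub>N\<^esub>) \<otimes>\<^bsub>N\<^esub> act g \<eta>"
    using assms(1) unfolding left_skew_bracoid_def by blast
  have canc2: "\<And>a y. a \<in> carrier N \<Longrightarrow> y \<in> carrier N \<Longrightarrow> inv\<^bsub>N\<^esub> a \<otimes>\<^bsub>N\<^esub> (a \<otimes>\<^bsub>N\<^esub> y) = y"
    by (simp add: N.m_assoc[symmetric])
  define lam where "lam g x = inv\<^bsub>N\<^esub> (act g \<one>\<^bsub>N\<^esub>) \<otimes>\<^bsub>N\<^esub> act g x" for g x
  have lcl: "\<And>g x. g \<in> carrier G \<Longrightarrow> x \<in> carrier N \<Longrightarrow> lam g x \<in> carrier N"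
    unfolding lam_def using cl by simp
  have al: "\<And>g x. bracoid_alpha N act g x = lam g x \<otimes>\<^bsub>N\<^esub> inv\<^bsub>N\<^esub> x"
    unfolding lam_def bracoid_alpha_def by simp
  have lhom: "\<And>g x y. g \<in> carrier G \<Longrightarrow> x \<in> carrier N \<Longrightarrow> y \<in> carrier N \<Longrightarrow>
      lam g (x \<otimes>\<^bsub>N\<^esub> y) = lam g x \<otimes>\<^bsub>N\<^esub> lam g y"
    unfolding lam_def using cl br by (simp add: N.m_assoc)
  have lone: "\<And>g. g \<in> carrier G \<Longrightarrow> lam g \<one>\<^bsub>N\<^esub> = \<one>\<^bsub>N\<^esub>"
    unfolding lam_def using cl by simp
  have linv: "\<And>g x. g \<in> carrier G \<Longrightarrow> x \<in> carrier N \<Longrightarrow> lam g (inv\<^bsub>N\<^esub> x) = inv\<^bsub>N\<^esub> (lam g x)"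
  proof -
    fix g x assume g: "g \<in> carrier G" and x: "x \<in> carrier N"
    have "lam g x \<otimes>\<^bsub>N\<^esub> lam g (inv\<^bsub>N\<^esub> x) = \<one>\<^bsub>N\<^esub>"
      using lhom[OF g x, of "inv\<^bsub>N\<^esub> x"] lone[OF g] x by simp
    thus "lam g (inv\<^bsub>N\<^esub> x) = inv\<^bsub>N\<^esub> (lam g x)"
      using lcl g x by (metis N.inv_closed N.inv_equality N.r_inv N.m_assoc N.l_inv N.r_one N.l_one)
  qed
  have lcomp: "lam (g \<otimes>\<^bsub>G\<^esub> h) x = lam g (lam h x)" if x: "x \<in> carrier N" for x
  proof -
    let ?zh = "act h \<one>\<^bsub>N\<^esub>"
    have canc: "\<And>a y. a \<in> carrier N \<Longrightarrow> y \<in> carrier N \<Longrightarrow> a \<otimes>\<^bsub>N\<^esub> (inv\<^bsub>N\<^esub> a \<otimes>\<^bsub>N\<^esub> y) = y"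
      by (simp add: N.m_assoc[symmetric])
    have zh: "?zh \<in> carrier N" using cl assms(3) by simp
    have "lam g (lam h x) = lam g (inv\<^bsub>N\<^esub> ?zh) \<otimes>\<^bsub>N\<^esub> lam g (act h x)"
      unfolding lam_def[of h] using lhom assms(2) zh cl assms(3) x by simp
    also have "\<dots> = inv\<^bsub>N\<^esub> (lam g ?zh) \<otimes>\<^bsub>N\<^esub> lam g (act h x)"
      using linv assms(2) zh by simp
    also have "\<dots> = inv\<^bsub>N\<^esub> (inv\<^bsub>N\<^esub> (act g \<one>\<^bsub>N\<^esub>) \<otimes>\<^bsub>N\<^esub> act (g \<otimes>\<^bsub>G\<^esub> h) \<one>\<^bsub>N\<^esub>) \<otimes>\<^bsub>N\<^esub>
        (inv\<^bsub>N\<^esub> (act g \<one>\<^bsub>N\<^esub>) \<otimes>\<^bsub>N\<^esub> act (g \<otimes>\<^bsub>G\<^esub> h) x)"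
      unfolding lam_def using comp assms(2,3) x by simp
    also have "\<dots> = lam (g \<otimes>\<^bsub>G\<^esub> h) x"
      unfolding lam_def using cl assms(2,3) x canc
      by (simp add: N.inv_mult_group N.m_assoc)
    finally show ?thesis by simp
  qed
  have e: "\<eta> \<in> carrier N" and m: "\<mu> \<in> carrier N" by fact+
  have g: "g \<in> carrier G" and h: "h \<in> carrier G" by fact+
  have le: "lam g \<eta> \<in> carrier N" "lam g \<mu> \<in> carrier N" "lam h \<eta> \<in> carrier N"
    using lcl e m g h by auto
  have s1: "bracoid_alpha N act g (\<eta> \<otimes>\<^bsub>N\<^esub> \<mu>) =
           bracoid_alpha N act g \<eta> \<otimes>\<^bsub>N\<^esub> \<eta> \<otimes>\<^bsub>N\<^esub> bracoid_alpha N act g \<mu> \<otimes>\<^bsub>N\<^esub> inv\<^bsub>N\<^esub> \<eta>"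
    unfolding al using lhom[OF g e m] le e m by (simp add: N.m_assoc N.inv_mult_group)
  have s2: "bracoid_alpha N act g \<one>\<^bsub>N\<^esub> = \<one>\<^bsub>N\<^esub>" unfolding al using lone g by simp
  have s3: "bracoid_alpha N act \<one>\<^bsub>G\<^esub> \<eta> = \<one>\<^bsub>N\<^esub>" unfolding bracoid_alpha_def using F(5) e by (simp add: N.m_assoc)
  have s4: "bracoid_alpha N act g (inv\<^bsub>N\<^esub> \<eta>) =
           inv\<^bsub>N\<^esub> \<eta> \<otimes>\<^bsub>N\<^esub> inv\<^bsub>N\<^esub> (bracoid_alpha N act g \<eta>) \<otimes>\<^bsub>N\<^esub> \<eta>"
    unfolding al using linv[OF g e] le e by (simp add: N.m_assoc N.inv_mult_group canc2)
  have ah: "bracoid_alpha N act h \<eta> \<in> carrier N" unfolding al using le e by simp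
  have s5: "bracoid_alpha N act (g \<otimes>\<^bsub>G\<^esub> h) \<eta> =
           bracoid_alpha N act g (bracoid_alpha N act h \<eta>) \<otimes>\<^bsub>N\<^esub> bracoid_alpha N act h \<eta>
             \<otimes>\<^bsub>N\<^esub> bracoid_alpha N act g \<eta>"
  proof -
    have "lam g (bracoid_alpha N act h \<eta>) = lam g (lam h \<eta>) \<otimes>\<^bsub>N\<^esub> inv\<^bsub>N\<^esub> (lam g \<eta>)"
      unfolding al using lhom[OF g] linv[OF g] le e by simp
    moreover have "lam g (lam h \<eta>) \<in> carrier N" using lcl g le by simp
    ultimately show ?thesis
      unfolding al[of "g \<otimes>\<^bsub>G\<^esub> h"] lcomp[OF e] using le e ah
      apply (simp add: al[of g] N.m_assoc)
      by (simp add: al[of h] N.m_assoc[symmetric])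
  qed
  show ?thesis using s1 s2 s3 s4 s5 by blast
qed

end
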